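(* Let $\mathcal{A}=\mathcal{R}*_K\mathcal{S}*_L\mathcal{T}\in\mathbb{C}^{I_1\times\cdots\times I_N\times J_1\times\cdots\times J_M}$, where $\mathcal{R}\in\mathbb{C}^{I_1\times\cdots\times I_N\times H_1\times\cdots\times H_K}$, $\mathcal{S}\in\mathbb{C}^{H_1\times\cdots\times H_K\times G_1\times\cdots\times G_L}$ and $\mathcal{T}\in\mathbb{C}^{G_1\times\cdots\times G_L\times J_1\times\cdots\times J_M}$. Then $$\mathcal{A}^{\dagger}=(\mathcal{R}*_K\mathcal{S}*_L\mathcal{T})^{\dagger}=(\mathcal{R}^{\dagger}*_N\mathcal{A})^{\dagger}*_K\mathcal{R}^{\dagger}*_N\mathcal{A}*_M\mathcal{T}^{\dagger}*_L(\mathcal{A}*_M\mathcal{T}^{\dagger})^{\dagger}=(\mathcal{R}^{\dagger}*_N\mathcal{A})^{\dagger}*_K\mathcal{S}*_L(\mathcal{A}*_M\mathcal{T}^{\dagger})^{\dagger}.$$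
   Context: $\mathbb{C}^{I_1\times\cdots\times I_N}$ denotes the set of complex tensors of order $N$ and dimension $I_1\times\cdots\times I_N$. For $\mathcal{A}\in\mathbb{C}^{I_1\times\cdots\times I_N\times K_1\times\cdots\times K_N}$ and $\mathcal{B}\in\mathbb{C}^{K_1\times\cdots\times K_N\times J_1\times\cdots\times J_M}$, the Einstein product $\mathcal{A}*_N\mathcal{B}$ is defined by $(\mathcal{A}*_N\mathcal{B})_{i_1\dots i_N j_1\dots j_M}=\sum_{k_1,\dots,k_N}a_{i_1\dots i_N k_1\dots k_N}b_{k_1\dots k_N j_1\dots j_M}$; it is associative. $\mathcal{A}^H$ denotes the conjugate transpose (swap the two groups of indices and conjugate entries). For $\mathcal{A}\in\mathbb{C}^{I_1\times\cdots\times I_N\times J_1\times\cdots\times J_M}$ the Moore–Penrose inverse $\mathcal{A}^{\dagger}$ is the unique $\mathcal{X}\in\mathbb{C}^{J_1\times\cdots\times J_M\times I_1\times\cdots\times I_N}$ with $\mathcal{A}*_M\mathcal{X}*_N\mathcal{A}=\mathcal{A}$, $\mathcal{X}*_N\mathcal{A}*_M\mathcal{X}=\mathcal{X}$, $(\mathcal{A}*_M\mathcal{X})^H=\mathcal{A}*_M\mathcal{X}$, $(\mathcal{X}*_N\mathcal{A})^H=\mathcal{X}*_N\mathcal{A}$. *)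

theory Defs
  imports Complex_Main
begin

definition idx :: "nat list \<Rightarrow> nat list set" where
  "idx ds = {is. length is = length ds \<and> (\<forall>k < length ds. is ! k < ds ! k)}"

text \<open>A tensor in C^(I_1 x ... x I_N x J_1 x ... x J_M), stored as a function of the
  two index groups, zero outside the index range.\<close>
definition tensor :: "nat list \<Rightarrow> nat list \<Rightarrow> (nat list \<Rightarrow> nat list \<Rightarrow> complex) set" where
  "tensor I J = {A. \<forall>is js. (is \<notin> idx I \<or> js \<notin> idx J) \<longrightarrow> A is js = 0}"

definition ein :: "nat list \<Rightarrow> (nat list \<Rightarrow> nat list \<Rightarrow> complex) \<Rightarrow>
    (nat list \<Rightarrow> nat list \<Rightarrow> complex) \<Rightarrow> (nat list \<Rightarrow> nat list \<Rightarrow> complex)" where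
  "ein K A B = (\<lambda>is js. \<Sum>ks\<in>idx K. A is ks * B ks js)"

definition ctr :: "(nat list \<Rightarrow> nat list \<Rightarrow> complex) \<Rightarrow> (nat list \<Rightarrow> nat list \<Rightarrow> complex)" where
  "ctr A = (\<lambda>is js. cnj (A js is))"

definition is_mp :: "nat list \<Rightarrow> nat list \<Rightarrow> (nat list \<Rightarrow> nat list \<Rightarrow> complex) \<Rightarrow>
    (nat list \<Rightarrow> nat list \<Rightarrow> complex) \<Rightarrow> bool" where
  "is_mp I J A X \<longleftrightarrow> X \<in> tensor J I \<and>
     ein I (ein J A X) A = A \<and>
     ein J (ein I X A) X = X \<and>
     ctr (ein J A X) = ein J A X \<and>
     ctr (ein I X A) = ein I X A"

definition mpinv :: "nat list \<Rightarrow> nat list \<Rightarrow> (nat list \<Rightarrow> nat list \<Rightarrow> complex) \<Rightarrow>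
    (nat list \<Rightarrow> nat list \<Rightarrow> complex)" where
  "mpinv I J A = (THE X. is_mp I J A X)"

end

theory Submission
  imports Defs "HOL-Library.Function_Algebras"
begin

lemma sum_fun_app: "(sum f S) x = sum (\<lambda>i. f i x) S"
  by (induct S rule: infinite_finite_induct) auto

lemma finite_idx: "finite (idx ds)"
proof -
  have "idx ds \<subseteq> {xs. set xs \<subseteq> {..<sum_list ds} \<and> length xs = length ds}"
  proof
    fix xs assume "xs \<in> idx ds"
    hence l: "length xs = length ds" and b: "\<forall>k<length ds. xs ! k < ds ! k"
      by (auto simp: idx_def)
    have "set xs \<subseteq> {..<sum_list ds}"
    proof
      fix x assume "x \<in> set xs"
      then obtain k where k: "k < length xs" "xs ! k = x" by (auto simp: in_set_conv_nth)
      have "ds ! k \<le> sum_list ds" using k l by (simp add: elem_le_sum_list)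
      with b k l show "x \<in> {..<sum_list ds}" by fastforce
    qed
    with l show "xs \<in> {xs. set xs \<subseteq> {..<sum_list ds} \<and> length xs = length ds}" by auto
  qed
  thus ?thesis by (rule finite_subset) (rule finite_lists_length_eq, simp)
qed

lemma ein_assoc: "ein L (ein K A B) C = ein K A (ein L B C)"
  unfolding ein_def
  by (auto simp: fun_eq_iff sum_distrib_left sum_distrib_right mult.assoc intro: sum.swap)

lemma ctr_ctr[simp]: "ctr (ctr A) = A"
  by (simp add: ctr_def)

lemma ctr_ein: "ctr (ein K A B) = ein K (ctr B) (ctr A)"
  by (simp add: ctr_def ein_def fun_eq_iff mult.commute)

lemma ein_tensor: "P \<in> tensor I K1 \<Longrightarrow> Q \<in> tensor K2 J \<Longrightarrow> ein K P Q \<in> tensor I J"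
  by (auto simp: tensor_def ein_def)

lemma ctr_tensor: "A \<in> tensor I J \<Longrightarrow> ctr A \<in> tensor J I"
  by (auto simp: tensor_def ctr_def)

lemma ein_diff_right: "ein K A (B - C) = ein K A B - ein K A C"
  by (simp add: ein_def fun_eq_iff algebra_simps sum_subtractf)

lemma ein_diff_left: "ein K (B - C) A = ein K B A - ein K C A"
  by (simp add: ein_def fun_eq_iff algebra_simps sum_subtractf)

lemma ctr_diff: "ctr (B - C) = ctr B - ctr C"
  by (simp add: ctr_def fun_eq_iff)

lemma ein_zero_right[simp]: "ein K A 0 = 0"
  by (simp add: ein_def fun_eq_iff)

lemma ein_zero_left[simp]: "ein K 0 A = 0"
  by (simp add: ein_def fun_eq_iff)

lemma diff_tensor: "A \<in> tensor I J \<Longrightarrow> B \<in> tensor I J \<Longrightarrow> A - B \<in> tensor I J"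
  by (auto simp: tensor_def)

lemma positivity:
  assumes W: "\<forall>i j. i \<notin> idx I \<longrightarrow> W i j = 0" and z: "ein I (ctr W) W = 0"
  shows "W = 0"
proof -
  have "W i j = 0" for i j
  proof (cases "i \<in> idx I")
    case False thus ?thesis using W by auto
  next
    case True
    have "ein I (ctr W) W j j = 0" using z by simp
    hence "(\<Sum>k\<in>idx I. cnj (W k j) * W k j) = 0" by (simp add: ein_def ctr_def)
    moreover have "cnj (W k j) * W k j = complex_of_real ((norm (W k j))^2)" for k
      by (metis complex_norm_square mult.commute)
    ultimately have "complex_of_real (\<Sum>k\<in>idx I. (norm (W k j))^2) = 0" by simp
    hence "(\<Sum>k\<in>idx I. (norm (W k j))^2) = 0" by (simp only: of_real_eq_0_iff)
    hence "\<forall>k\<in>idx I. (norm (W k j))^2 = 0"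
      by (subst (asm) sum_nonneg_eq_0_iff) (auto simp: finite_idx)
    with True show ?thesis by auto
  qed
  thus ?thesis by (simp add: fun_eq_iff)
qed

definition delta :: "nat list \<Rightarrow> nat list \<Rightarrow> nat list \<Rightarrow> complex" where
  "delta J = (\<lambda>i j. if i \<in> idx J \<and> j = i then 1 else 0)"

lemma delta_tensor: "delta J \<in> tensor J J"
  by (auto simp: delta_def tensor_def)

lemma ein_delta_right:
  assumes "A \<in> tensor I J" shows "ein J A (delta J) = A"
proof (rule ext, rule ext)
  fix x y
  have "ein J A (delta J) x y = (\<Sum>ks\<in>idx J. if ks = y then (if y \<in> idx J then A x ks else 0) else 0)"
    by (auto simp: ein_def delta_def intro!: sum.cong)
  also have "\<dots> = A x y" using assms by (auto simp: finite_idx tensor_def)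
  finally show "ein J A (delta J) x y = A x y" .
qed

lemma ein_delta_left:
  assumes "A \<in> tensor J K" shows "ein J (delta J) A = A"
proof (rule ext, rule ext)
  fix x y
  have "ein J (delta J) A x y = (\<Sum>ks\<in>idx J. if ks = x then (if x \<in> idx J then A ks y else 0) else 0)"
    by (auto simp: ein_def delta_def intro!: sum.cong)
  also have "\<dots> = A x y" using assms by (auto simp: finite_idx tensor_def)
  finally show "ein J (delta J) A x y = A x y" .
qed


lemma mp_unique:
  assumes X: "is_mp I J A X" and Y: "is_mp I J A Y"
  shows "X = Y"
proof -
  from X have x1: "ein I (ein J A X) A = A" and x2: "ein J (ein I X A) X = X"
    and x3: "ctr (ein J A X) = ein J A X" and x4: "ctr (ein I X A) = ein I X A"
    by (auto simp: is_mp_def)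
  from Y have y1: "ein I (ein J A Y) A = A" and y2: "ein J (ein I Y A) Y = Y"
    and y3: "ctr (ein J A Y) = ein J A Y" and y4: "ctr (ein I Y A) = ein I Y A"
    by (auto simp: is_mp_def)
  have AX: "ein J A X = ein J A Y"
  proof -
    have "ein J A X = ein I (ein J A Y) (ein J A X)"
      by (metis ein_assoc y1)
    also have "\<dots> = ctr (ein I (ein J A Y) (ein J A X))"
      by (metis \<open>ein J A X = ein I (ein J A Y) (ein J A X)\<close> x3)
    also have "\<dots> = ein I (ein J A X) (ein J A Y)"
      by (subst ctr_ein) (simp add: x3 y3)
    also have "\<dots> = ein J A Y" by (metis ein_assoc x1)
    finally show ?thesis .
  qed
  have XA: "ein I X A = ein I Y A"
  proof -
    have "ein I X A = ein J (ein I X A) (ein I Y A)"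
      by (metis ein_assoc y1)
    also have "\<dots> = ctr (ein J (ein I X A) (ein I Y A))"
      by (metis \<open>ein I X A = ein J (ein I X A) (ein I Y A)\<close> x4)
    also have "\<dots> = ein J (ein I Y A) (ein I X A)"
      by (subst ctr_ein) (simp add: x4 y4)
    also have "\<dots> = ein I Y A" by (metis ein_assoc x1)
    finally show ?thesis .
  qed
  have "X = ein J (ein I X A) X" using x2 by simp
  also have "\<dots> = ein I Y (ein J A X)" by (simp add: XA ein_assoc)
  also have "\<dots> = ein J (ein I Y A) Y" by (simp add: AX ein_assoc)
  also have "\<dots> = Y" by (rule y2)
  finally show ?thesis .
qed

lemma mp_exists_aux:
  assumes A: "A \<in> tensor I J"
    and Bt: "B \<in> tensor J J"
    and comm: "ein J (ein I (ctr A) A) B = ein J B (ein I (ctr A) A)"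
    and e1: "ein J (ein I (ctr A) A) (ein J (ein I (ctr A) A) B) = ein I (ctr A) A"
  shows "\<exists>X. is_mp I J A X"
proof -
  define m where "m = ein J"
  define H where "H = ein I (ctr A) A"
  have Hh: "ctr H = H" by (simp add: H_def ctr_ein)
  have Ht: "H \<in> tensor J J" unfolding H_def by (rule ein_tensor[OF ctr_tensor[OF A] A])
  note ma = ein_assoc[where L=J and K=J, folded m_def]
  define E where "E = m H B"
  define Bs where "Bs = ctr B"
  define F where "F = m Bs H"
  have comm': "m H B = m B H" using comm by (simp add: m_def H_def)
  have e1': "m H E = H" using e1 by (simp add: m_def H_def E_def)
  have EH: "m E H = H" by (metis E_def comm' e1' ma)
  have FctrE: "F = ctr E" by (simp add: F_def E_def Bs_def m_def ctr_ein Hh)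
  have commS: "m H Bs = F" using arg_cong[OF comm', of ctr]
    by (simp add: F_def Bs_def m_def ctr_ein Hh)
  have FH: "m F H = H"
  proof -
    have "ctr (m E H) = ctr H" by (simp add: EH)
    hence HF: "m H F = H" by (simp add: m_def ctr_ein Hh FctrE)
    show ?thesis by (metis F_def HF commS ma)
  qed
  have FE1: "m F E = F" by (metis F_def E_def e1' ma)
  have FE2: "m F E = E" by (metis E_def FH ma)
  have EF: "E = F" using FE1 FE2 by simp
  have Eh: "ctr E = E" using EF FctrE by simp
  define G where "G = m Bs E"
  have Gh: "ctr G = G"
    by (metis Bs_def EF Eh F_def G_def E_def ctr_ctr ctr_ein m_def ma)
  have GH: "m G H = E" by (metis EF EH F_def G_def ma)
  have HG: "m H G = E" by (metis EF FE2 G_def commS ma)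
  have EE: "m E E = E" by (metis E_def EH ma)
  have GE: "m G E = G" by (metis EE G_def ma)
  have EG: "m E G = G" by (metis GE GH HG ma)
  define X where "X = ein J G (ctr A)"
  have Bst: "Bs \<in> tensor J J" using Bt by (simp add: Bs_def ctr_tensor)
  have Gt: "G \<in> tensor J J" unfolding G_def E_def m_def
    by (rule ein_tensor[OF Bst ein_tensor[OF Ht Bt]])
  have Xt: "X \<in> tensor J I" unfolding X_def by (rule ein_tensor[OF Gt ctr_tensor[OF A]])
  have XA: "ein I X A = E" by (simp add: X_def ein_assoc H_def[symmetric] GH[unfolded m_def])
  have AE: "ein J A E = A"
  proof -
    define W where "W = A - ein J A E"
    have HX: "ein I (ctr A) (ein J A Z) = ein J H Z" for Z by (simp add: H_def ein_assoc)
    have Et: "E \<in> tensor J J" unfolding E_def m_def by (rule ein_tensor[OF Ht Bt])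
    have Wt: "W \<in> tensor I J" unfolding W_def
      by (rule diff_tensor[OF A ein_tensor[OF A Et]])
    have "ein I (ctr W) W = 0"
      unfolding W_def ctr_diff ein_diff_left ein_diff_right ctr_ein
      using EH e1' Eh by (simp add: ein_assoc H_def[symmetric] m_def HX)
    hence "W = 0" by (rule positivity[rotated]) (use Wt in \<open>auto simp: tensor_def\<close>)
    thus ?thesis by (simp add: W_def)
  qed
  have "is_mp I J A X"
    unfolding is_mp_def
  proof (intro conjI)
    show "X \<in> tensor J I" by (rule Xt)
    show "ein I (ein J A X) A = A" using AE XA by (simp add: ein_assoc)
    show "ein J (ein I X A) X = X" by (metis XA X_def EG m_def ein_assoc)
    show "ctr (ein J A X) = ein J A X" using Gh by (simp add: X_def ctr_ein ein_assoc)
    show "ctr (ein I X A) = ein I X A" using Eh by (simp add: XA)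
  qed
  thus ?thesis by blast
qed


primrec pw :: "nat list \<Rightarrow> (nat list \<Rightarrow> nat list \<Rightarrow> complex) \<Rightarrow> nat \<Rightarrow> (nat list \<Rightarrow> nat list \<Rightarrow> complex)" where
  "pw J H 0 = delta J"
| "pw J H (Suc k) = ein J H (pw J H k)"

lemma pw_tensor: "H \<in> tensor J J \<Longrightarrow> pw J H k \<in> tensor J J"
  by (induct k) (auto simp: delta_tensor intro: ein_tensor)

lemma pw_comm: "H \<in> tensor J J \<Longrightarrow> ein J H (pw J H k) = ein J (pw J H k) H"
proof (induct k)
  case 0 thus ?case by (simp add: ein_delta_left ein_delta_right)
next
  case (Suc k)
  have "ein J H (ein J H (pw J H k)) = ein J H (ein J (pw J H k) H)" using Suc by simp
  thus ?case by (simp add: ein_assoc)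
qed

lemma pw_add: "H \<in> tensor J J \<Longrightarrow> pw J H (a + b) = ein J (pw J H a) (pw J H b)"
proof (induct a)
  case 0 thus ?case by (simp add: ein_delta_left[OF pw_tensor])
next
  case (Suc a) thus ?case by (simp add: ein_assoc)
qed

lemma pw_one: "H \<in> tensor J J \<Longrightarrow> pw J H (Suc 0) = H"
  by (simp add: ein_delta_right)

definition lc :: "nat set \<Rightarrow> (nat \<Rightarrow> complex) \<Rightarrow> (nat \<Rightarrow> nat list \<Rightarrow> nat list \<Rightarrow> complex)
   \<Rightarrow> nat list \<Rightarrow> nat list \<Rightarrow> complex" where
  "lc S c P = (\<lambda>i j. \<Sum>k\<in>S. c k * P k i j)"

lemma ein_lc_right: "ein K A (lc S c P) = lc S c (\<lambda>k. ein K A (P k))"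
  unfolding ein_def lc_def
  by (auto simp: fun_eq_iff sum_distrib_left sum_distrib_right mult.assoc mult.left_commute intro: sum.swap)

lemma ein_lc_left: "ein K (lc S c P) A = lc S c (\<lambda>k. ein K (P k) A)"
  unfolding ein_def lc_def
  by (auto simp: fun_eq_iff sum_distrib_left sum_distrib_right mult.assoc mult.left_commute intro: sum.swap)

lemma lc_tensor: "(\<And>k. k \<in> S \<Longrightarrow> P k \<in> tensor I J) \<Longrightarrow> lc S c P \<in> tensor I J"
  by (auto simp: lc_def tensor_def)

lemma kill:
  assumes Ht: "H \<in> tensor J J" and Hh: "ctr H = H"
  shows "ein J (pw J H (Suc k)) Y = 0 \<Longrightarrow> ein J H Y = 0"
proof (induct k arbitrary: Y)
  case 0 thus ?case using pw_one[OF Ht] by simp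
next
  case (Suc k)
  have "ein J (pw J H (Suc k)) (ein J H Y) = ein J (ein J (pw J H (Suc k)) H) Y"
    by (simp only: ein_assoc)
  also have "\<dots> = ein J (pw J H (Suc (Suc k))) Y"
    by (metis pw.simps(2) pw_comm Ht)
  finally have "ein J (pw J H (Suc k)) (ein J H Y) = 0" using Suc.prems by (simp add: zero_fun_def)
  hence HHY: "ein J H (ein J H Y) = 0" by (rule Suc.hyps)
  show ?case
  proof (rule positivity)
    show "\<forall>i j. i \<notin> idx J \<longrightarrow> ein J H Y i j = 0" using Ht by (auto simp: tensor_def ein_def)
    show "ein J (ctr (ein J H Y)) (ein J H Y) = 0"
      by (simp add: ctr_ein Hh ein_assoc HHY)
  qed
qed

definition sc :: "complex \<Rightarrow> (nat list \<Rightarrow> nat list \<Rightarrow> complex) \<Rightarrow> (nat list \<Rightarrow> nat list \<Rightarrow> complex)" where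
  "sc c A = (\<lambda>i j. c * A i j)"

interpretation tv: vector_space sc
  by unfold_locales (auto simp: sc_def fun_eq_iff algebra_simps)

definition el :: "nat list \<Rightarrow> nat list \<Rightarrow> nat list \<Rightarrow> nat list \<Rightarrow> complex" where
  "el a b = (\<lambda>i j. if i = a \<and> j = b then 1 else 0)"

lemma tensor_span:
  assumes "T \<in> tensor J J"
  shows "T \<in> tv.span ((\<lambda>(a,b). el a b) ` (idx J \<times> idx J))"
proof -
  let ?S = "idx J \<times> idx J"
  have "(\<Sum>p\<in>?S. sc (T (fst p) (snd p)) (el (fst p) (snd p))) = T"
  proof (rule ext, rule ext)
    fix i j
    have "(\<Sum>p\<in>?S. sc (T (fst p) (snd p)) (el (fst p) (snd p))) i j
        = (\<Sum>p\<in>?S. if p = (i,j) then T i j else 0)"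
      by (auto simp: sum_fun_app sc_def el_def intro!: sum.cong)
    also have "\<dots> = T i j" using assms
      by (auto simp: finite_idx tensor_def)
    finally show "(\<Sum>p\<in>?S. sc (T (fst p) (snd p)) (el (fst p) (snd p))) i j = T i j" .
  qed
  moreover have "(\<Sum>p\<in>?S. sc (T (fst p) (snd p)) (el (fst p) (snd p))) \<in> tv.span ((\<lambda>(a,b). el a b) ` ?S)"
    by (intro tv.span_sum tv.span_scale tv.span_base) auto
  ultimately show ?thesis by simp
qed

lemma dep:
  assumes Ht: "H \<in> tensor J J"
  shows "\<exists>n c. lc {..n} c (pw J H) = 0 \<and> (\<exists>k\<le>n. c k \<noteq> 0)"
proof -
  define Es where "Es = (\<lambda>(a,b). el a b) ` (idx J \<times> idx J)"
  define N where "N = card (idx J \<times> idx J)"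
  have fE: "finite Es" by (simp add: Es_def finite_idx)
  have cE: "card Es \<le> N" unfolding Es_def N_def by (rule card_image_le) (simp add: finite_idx)
  show ?thesis
  proof (cases "inj_on (pw J H) {..N}")
    case True
    define S where "S = pw J H ` {..N}"
    have cS: "card S = Suc N" using True by (simp add: S_def card_image)
    have fS: "finite S" by (simp add: S_def)
    have "tv.dependent S"
    proof (rule ccontr)
      assume "tv.independent S"
      moreover have "S \<subseteq> tv.span Es" unfolding S_def Es_def
        using tensor_span pw_tensor[OF Ht] by blast
      ultimately have "card S \<le> card Es" using tv.independent_span_bound[OF fE] by blast
      with cS cE show False by simp
    qed
    then obtain u where u: "\<exists>v\<in>S. u v \<noteq> 0" "(\<Sum>v\<in>S. sc (u v) v) = 0"
      using tv.dependent_finite[OF fS] by blast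
    define c where "c k = u (pw J H k)" for k
    have "lc {..N} c (pw J H) = 0"
    proof (rule ext, rule ext)
      fix i j
      have "lc {..N} c (pw J H) i j = (\<Sum>v\<in>S. sc (u v) v) i j"
        unfolding S_def using True
        by (simp add: sum_fun_app sc_def lc_def c_def sum.reindex)
      thus "lc {..N} c (pw J H) i j = 0 i j" using u(2) by simp
    qed
    moreover have "\<exists>k\<le>N. c k \<noteq> 0" using u(1) by (auto simp: S_def c_def)
    ultimately show ?thesis by blast
  next
    case False
    then obtain a b where ab: "a \<le> N" "b \<le> N" "a \<noteq> b" "pw J H a = pw J H b"
      by (auto simp: inj_on_def)
    define c where "c k = (if k = a then 1 else if k = b then -1 else (0::complex))" for k
    have "lc {..N} c (pw J H) = 0"
    proof (rule ext, rule ext)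
      fix i j
      have "lc {..N} c (pw J H) i j = (\<Sum>k\<in>{..N}. (if k = a then pw J H a i j else 0) - (if k = b then pw J H b i j else 0))"
        unfolding lc_def c_def using ab by (intro sum.cong) auto
      also have "\<dots> = 0" using ab by (simp add: sum_subtractf)
      finally show "lc {..N} c (pw J H) i j = 0 i j" by simp
    qed
    moreover have "c a \<noteq> 0" by (simp add: c_def)
    ultimately show ?thesis using ab by blast
  qed
qed


lemma ein_sc_right: "ein K A (sc c B) = sc c (ein K A B)"
  by (simp add: ein_def sc_def fun_eq_iff sum_distrib_left algebra_simps)

lemma ein_sc_left: "ein K (sc c B) A = sc c (ein K B A)"
  by (simp add: ein_def sc_def fun_eq_iff sum_distrib_left algebra_simps)

lemma sc_tensor: "A \<in> tensor I J \<Longrightarrow> sc c A \<in> tensor I J"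
  by (auto simp: sc_def tensor_def)

lemma stepa:
  assumes Ht: "H \<in> tensor J J" and Hh: "ctr H = H"
  shows "\<exists>B\<in>tensor J J. ein J H B = ein J B H \<and> ein J H (ein J H B) = H"
proof -
  obtain n c where rel0: "lc {..n} c (pw J H) = 0" and nz: "\<exists>k\<le>n. c k \<noteq> 0"
    using dep[OF Ht] by blast
  define m where "m = (LEAST k. c k \<noteq> 0)"
  obtain k0 where k0: "k0 \<le> n" "c k0 \<noteq> 0" using nz by blast
  have cm: "c m \<noteq> 0" unfolding m_def by (rule LeastI[of _ k0]) (rule k0(2))
  have "m \<le> k0" unfolding m_def by (rule Least_le) (rule k0(2))
  hence mle: "m \<le> n" using k0(1) by linarith
  have below: "k < m \<Longrightarrow> c k = 0" for k unfolding m_def using not_less_Least by blast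
  define r where "r = n - m"
  define d where "d j = c (j + m)" for j
  define Z where "Z = lc {..r} d (pw J H)"
  have Zt: "Z \<in> tensor J J" unfolding Z_def by (rule lc_tensor) (rule pw_tensor[OF Ht])
  have rel: "ein J (pw J H m) Z = 0"
  proof (rule ext, rule ext)
    fix i j
    have "ein J (pw J H m) Z i j = (\<Sum>l\<in>{0..r}. c (l + m) * pw J H (l + m) i j)"
      unfolding Z_def ein_lc_right by (simp add: lc_def d_def pw_add[OF Ht, symmetric] add.commute atLeast0AtMost)
    also have "\<dots> = (\<Sum>k\<in>{0+m..r+m}. c k * pw J H k i j)"
      by (rule sum.shift_bounds_cl_nat_ivl[symmetric])
    also have "\<dots> = (\<Sum>k\<in>{..n}. c k * pw J H k i j)"
      using mle below by (intro sum.mono_neutral_left) (auto simp: r_def)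
    also have "\<dots> = 0" using rel0 by (metis lc_def zero_fun_apply)
    finally show "ein J (pw J H m) Z i j = 0 i j" by simp
  qed
  have HZ: "ein J H Z = 0"
  proof (cases m)
    case 0
    hence "Z = 0" using rel by (simp add: ein_delta_left[OF Zt])
    thus ?thesis by simp
  next
    case (Suc k)
    thus ?thesis using kill[OF Ht Hh, of k Z] rel by simp
  qed
  define Q where "Q = lc {..<r} (\<lambda>j. d (Suc j)) (pw J H)"
  have d0: "d 0 \<noteq> 0" using cm by (simp add: d_def)
  have key: "d 0 * H i j + ein J H (ein J H Q) i j = 0" for i j
  proof -
    have "0 = ein J H Z i j" using HZ by simp
    also have "\<dots> = (\<Sum>l\<in>{..r}. d l * pw J H (Suc l) i j)"
      unfolding Z_def ein_lc_right by (simp add: lc_def)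
    also have "\<dots> = d 0 * pw J H (Suc 0) i j + (\<Sum>l\<in>{..<r}. d (Suc l) * pw J H (Suc (Suc l)) i j)"
      by (rule sum.atMost_shift)
    also have "\<dots> = d 0 * H i j + ein J H (ein J H Q) i j"
      unfolding Q_def ein_lc_right by (simp add: lc_def ein_delta_right[OF Ht])
    finally show ?thesis by simp
  qed
  define B where "B = sc (- 1 / d 0) Q"
  have Qt: "Q \<in> tensor J J" unfolding Q_def by (rule lc_tensor) (rule pw_tensor[OF Ht])
  have Bt: "B \<in> tensor J J" unfolding B_def by (rule sc_tensor[OF Qt])
  have HQ: "ein J H Q = ein J Q H"
    unfolding Q_def ein_lc_right ein_lc_left using pw_comm[OF Ht] by simp
  have comm: "ein J H B = ein J B H" by (simp only: B_def ein_sc_right ein_sc_left HQ)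
  have e1: "ein J H (ein J H B) = H"
  proof (rule ext, rule ext)
    fix i j
    have "ein J H (ein J H B) i j = (- 1 / d 0) * ein J H (ein J H Q) i j"
      by (simp only: B_def ein_sc_right) (simp add: sc_def)
    also have "\<dots> = (- 1 / d 0) * (- (d 0 * H i j))"
      using key[of i j] by (simp add: add_eq_0_iff)
    also have "\<dots> = H i j" using d0 by simp
    finally show "ein J H (ein J H B) i j = H i j" .
  qed
  show ?thesis using Bt comm e1 by blast
qed

lemma mp_exists:
  assumes A: "A \<in> tensor I J"
  shows "\<exists>X. is_mp I J A X"
proof -
  have Ht: "ein I (ctr A) A \<in> tensor J J" by (rule ein_tensor[OF ctr_tensor[OF A] A])
  have Hh: "ctr (ein I (ctr A) A) = ein I (ctr A) A" by (simp add: ctr_ein)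
  obtain B where "B \<in> tensor J J" "ein J (ein I (ctr A) A) B = ein J B (ein I (ctr A) A)"
    "ein J (ein I (ctr A) A) (ein J (ein I (ctr A) A) B) = ein I (ctr A) A"
    using stepa[OF Ht Hh] by blast
  thus ?thesis using mp_exists_aux[OF A] by blast
qed

lemma mpinv_is_mp:
  assumes A: "A \<in> tensor I J"
  shows "is_mp I J A (mpinv I J A)"
proof -
  have "\<exists>!X. is_mp I J A X" using mp_exists[OF A] mp_unique by blast
  thus ?thesis unfolding mpinv_def by (rule theI')
qed

lemma mpinv_eq:
  assumes "is_mp I J A X" shows "mpinv I J A = X"
  unfolding mpinv_def
proof (rule the_equality)
  show "is_mp I J A X" by (rule assms)
  show "\<And>Y. is_mp I J A Y \<Longrightarrow> Y = X" by (rule mp_unique[OF _ assms])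
qed


theorem theorem3p5:
  fixes I H G J :: "nat list"
    and R S T :: "nat list \<Rightarrow> nat list \<Rightarrow> complex"
  assumes "R \<in> tensor I H" and "S \<in> tensor H G" and "T \<in> tensor G J"
  defines "A \<equiv> ein G (ein H R S) T"
  shows "mpinv I J A =
           ein G (ein J (ein I (ein H (mpinv H J (ein I (mpinv I H R) A)) (mpinv I H R)) A)
                    (mpinv G J T))
                 (mpinv I G (ein J A (mpinv G J T))) \<and>
         mpinv I J A =
           ein G (ein H (mpinv H J (ein I (mpinv I H R) A)) S)
                 (mpinv I G (ein J A (mpinv G J T)))"
proof -
  note Rt = assms(1) and St = assms(2) and Tt = assms(3)
  have At: "A \<in> tensor I J" unfolding A_def by (rule ein_tensor[OF ein_tensor[OF Rt St] Tt])
  define Rp where "Rp = mpinv I H R"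
  define Tp where "Tp = mpinv G J T"
  have mR: "is_mp I H R Rp" unfolding Rp_def by (rule mpinv_is_mp[OF Rt])
  have mT: "is_mp G J T Tp" unfolding Tp_def by (rule mpinv_is_mp[OF Tt])
  have Rpt: "Rp \<in> tensor H I" and r1: "ein I (ein H R Rp) R = R" and r2: "ein H (ein I Rp R) Rp = Rp"
    and r3: "ctr (ein H R Rp) = ein H R Rp" and r4: "ctr (ein I Rp R) = ein I Rp R"
    using mR by (auto simp: is_mp_def)
  have Tpt: "Tp \<in> tensor J G" and t1: "ein G (ein J T Tp) T = T" and t2: "ein J (ein G Tp T) Tp = Tp"
    and t3: "ctr (ein J T Tp) = ein J T Tp" and t4: "ctr (ein G Tp T) = ein G Tp T"
    using mT by (auto simp: is_mp_def)
  define U where "U = ein I Rp A"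
  define V where "V = ein J A Tp"
  have Ut: "U \<in> tensor H J" unfolding U_def by (rule ein_tensor[OF Rpt At])
  have Vt: "V \<in> tensor I G" unfolding V_def by (rule ein_tensor[OF At Tpt])
  define X where "X = mpinv H J U"
  define Y where "Y = mpinv I G V"
  have mU: "is_mp H J U X" unfolding X_def by (rule mpinv_is_mp[OF Ut])
  have mV: "is_mp I G V Y" unfolding Y_def by (rule mpinv_is_mp[OF Vt])
  have Xt: "X \<in> tensor J H" and u1: "ein H (ein J U X) U = U" and u2: "ein J (ein H X U) X = X"
    and u3: "ctr (ein J U X) = ein J U X" and u4: "ctr (ein H X U) = ein H X U"
    using mU by (auto simp: is_mp_def)
  have Yt: "Y \<in> tensor G I" and v1: "ein I (ein G V Y) V = V" and v2: "ein G (ein I Y V) Y = Y"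
    and v3: "ctr (ein G V Y) = ein G V Y" and v4: "ctr (ein I Y V) = ein I Y V"
    using mV by (auto simp: is_mp_def)
  have A2: "A = ein H R (ein G S T)" unfolding A_def by (simp add: ein_assoc)
  have RU: "ein H R U = A"
  proof -
    have "ein H R U = ein I (ein H R Rp) (ein H R (ein G S T))" by (simp add: U_def A2 ein_assoc)
    also have "\<dots> = ein H (ein I (ein H R Rp) R) (ein G S T)" by (simp add: ein_assoc)
    also have "\<dots> = A" by (simp add: r1 A2)
    finally show ?thesis .
  qed
  have VT: "ein G V T = A"
  proof -
    have "ein G V T = ein J (ein G (ein H R S) T) (ein G Tp T)" by (simp add: V_def A_def ein_assoc)
    also have "\<dots> = ein G (ein H R S) (ein J T (ein G Tp T))" by (simp add: ein_assoc)
    also have "\<dots> = A" by (simp add: t1 A_def flip: ein_assoc)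
    finally show ?thesis .
  qed
  define Z where "Z = ein G (ein J (ein H X U) Tp) Y"
  have Zeq1: "ein G (ein J (ein I (ein H X Rp) A) Tp) Y = Z"
    by (simp add: Z_def U_def ein_assoc)
  have AXU: "ein J A (ein H X U) = A"
  proof -
    have "ein J A (ein H X U) = ein H R (ein H (ein J U X) U)" by (simp add: RU[symmetric] ein_assoc)
    thus ?thesis by (simp add: u1 RU)
  qed
  have VYA: "ein I (ein G V Y) A = A"
  proof -
    have "ein I (ein G V Y) A = ein G (ein I (ein G V Y) V) T" by (simp add: VT[symmetric] ein_assoc)
    thus ?thesis by (simp add: v1 VT)
  qed
  have AZ: "ein J A Z = ein G V Y"
  proof -
    have "ein J A Z = ein G (ein J (ein J A (ein H X U)) Tp) Y" by (simp add: Z_def ein_assoc)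
    thus ?thesis by (simp add: AXU V_def)
  qed
  have ZA: "ein I Z A = ein H X U"
  proof -
    have "ein I Z A = ein H X (ein I Rp (ein I (ein G V Y) A))" by (simp add: Z_def U_def V_def ein_assoc)
    thus ?thesis by (simp add: VYA U_def)
  qed
  have Zt: "Z \<in> tensor J I" unfolding Z_def
    by (rule ein_tensor[OF ein_tensor[OF ein_tensor[OF Xt Ut] Tpt] Yt])
  have mZ: "is_mp I J A Z"
    unfolding is_mp_def
  proof (intro conjI)
    show "Z \<in> tensor J I" by (rule Zt)
    show "ein I (ein J A Z) A = A" by (simp add: AZ VYA)
    show "ein J (ein I Z A) Z = Z"
    proof -
      have "ein J (ein I Z A) Z = ein G (ein J (ein H (ein J (ein H X U) X) U) Tp) Y"
        by (simp only: ZA) (simp add: Z_def ein_assoc)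
      thus ?thesis by (simp add: u2 Z_def)
    qed
    show "ctr (ein J A Z) = ein J A Z" by (simp add: AZ v3)
    show "ctr (ein I Z A) = ein I Z A" by (simp add: ZA u4)
  qed
  have XP: "ein H X (ein I Rp R) = X"
  proof -
    have PU: "ein H (ein I Rp R) U = U"
    proof -
      have "ein H (ein I Rp R) U = ein I (ein H (ein I Rp R) Rp) A" by (simp add: U_def ein_assoc)
      thus ?thesis by (simp add: r2 U_def)
    qed
    have UP: "ein H (ctr U) (ein I Rp R) = ctr U"
      using arg_cong[OF PU, of ctr] by (subst (asm) ctr_ein) (simp only: r4)
    have X1: "X = ein H X (ein J (ctr X) (ctr U))"
    proof -
      have "X = ein H X (ein J U X)" using u2 by (simp add: ein_assoc)
      also have "\<dots> = ein H X (ctr (ein J U X))" by (simp add: u3)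
      finally show ?thesis by (simp only: ctr_ein)
    qed
    have "ein H X (ein I Rp R) = ein H X (ein J (ctr X) (ein H (ctr U) (ein I Rp R)))"
      by (subst X1) (simp only: ein_assoc)
    also have "\<dots> = X" by (simp only: UP X1[symmetric])
    finally show ?thesis .
  qed
  have QY: "ein G (ein J T Tp) Y = Y"
  proof -
    have VQ: "ein G V (ein J T Tp) = V"
    proof -
      have "ein G V (ein J T Tp) = ein J A (ein J (ein G Tp T) Tp)" by (simp add: V_def ein_assoc)
      thus ?thesis by (simp add: t2 V_def)
    qed
    have QV: "ein G (ein J T Tp) (ctr V) = ctr V"
      using arg_cong[OF VQ, of ctr] by (subst (asm) ctr_ein) (simp only: t3)
    have Y1: "Y = ein G (ein I (ctr V) (ctr Y)) Y"
    proof -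
      have "Y = ein G (ein I Y V) Y" using v2 by (simp add: ein_assoc)
      also have "\<dots> = ein G (ctr (ein I Y V)) Y" by (simp add: v4)
      finally show ?thesis by (simp only: ctr_ein ein_assoc)
    qed
    have "ein G (ein J T Tp) Y = ein G (ein I (ein G (ein J T Tp) (ctr V)) (ctr Y)) Y"
      by (subst Y1) (simp only: ein_assoc)
    also have "\<dots> = Y" by (simp only: QV Y1[symmetric])
    finally show ?thesis .
  qed
  have Zeq2: "ein G (ein H X S) Y = Z"
  proof -
    have "Z = ein G (ein J (ein I (ein H X Rp) A) Tp) Y" by (rule Zeq1[symmetric])
    also have "\<dots> = ein H (ein H X (ein I Rp R)) (ein G S (ein G (ein J T Tp) Y))"
      by (simp add: A2 ein_assoc)
    also have "\<dots> = ein G (ein H X S) Y"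
      using QY by (simp add: XP ein_assoc)
    finally show ?thesis by simp
  qed
  have "mpinv I J A = Z" by (rule mpinv_eq[OF mZ])
  thus ?thesis using Zeq1 Zeq2 by (simp add: Rp_def Tp_def U_def V_def X_def Y_def)
qed

end
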